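(* In the setting described in the context, for every $\theta\in\Theta$ one has $H_\theta\le C_\Upsilon(\theta)$, with equality if and only if $\langle w_j'(\theta)|w_k(\theta)\rangle=0$ for all $j,k$ (including $j=k$) with $p_j(\theta)>0$ and $p_k(\theta)>0$.
   Context: Let $\Theta\subseteq\mathbb{R}$ be an open interval and $D\ge1$. For $\theta\in\Theta$ let $\Phi_\theta$ be a quantum channel on $D\times D$ complex matrices and $\rho_0=|\psi_0\rangle\langle\psi_0|$ a fixed pure input state. Canonical Kraus operators are $D\times D$ matrices $\Upsilon_1(\theta),\dots,\Upsilon_D(\theta)$, differentiable in $\theta$, with $\sum_k\Upsilon_k^\dagger\Upsilon_k=\mathbb{I}$, $\Phi_\theta(\rho)=\sum_k\Upsilon_k\rho\Upsilon_k^\dagger$, and $\mathrm{tr}\{\Upsilon_k\rho_0\Upsilon_j^\dagger\}=\delta_{jk}p_k(\theta)$. Write $\Upsilon_k(\theta)|\psi_0\rangle=\sqrt{p_k(\theta)}|w_k(\theta)\rangle$ with $\{|w_k(\theta)\rangle\}$ an orthonormal basis of $\mathbb{C}^D$ differentiable in $\theta$, so the output is $\rho_\theta=\sum_kp_k|w_k\rangle\langle w_k|$. Each $p_k$ is assumed either identically zero or strictly positive on $\Theta$. Primes denote $d/d\theta$. $C_\Upsilon(\theta)=4\sum_k\mathrm{tr}\{\Upsilon_k'\rho_0\Upsilon_k'^\dagger\}$. $H_\theta=\mathrm{tr}\{\rho_\theta\lambda^2\}$ is the SLD quantum information of $\rho_\theta$, $\lambda$ any Hermitian solution of $d\rho_\theta/d\theta=\frac12(\rho_\theta\lambda+\lambda\rho_\theta)$.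 *)

theory Defs
  imports "HOL-Analysis.Analysis"
begin

text \<open>Vectors in C^D are complex^'n, D x D complex matrices are complex^'n^'n,
  with D = CARD('n).\<close>

definition braket :: "complex ^ 'n \<Rightarrow> complex ^ 'n \<Rightarrow> complex" where
  "braket x y = (\<Sum>i\<in>UNIV. cnj (x $ i) * y $ i)"

definition ketbra :: "complex ^ 'n \<Rightarrow> complex ^ 'n \<Rightarrow> complex ^ 'n ^ 'n" where
  "ketbra x y = (\<chi> i j. x $ i * cnj (y $ j))"

definition dagger :: "complex ^ 'n ^ 'n \<Rightarrow> complex ^ 'n ^ 'n" where
  "dagger A = (\<chi> i j. cnj (A $ j $ i))"

definition mtr :: "complex ^ 'n ^ 'n \<Rightarrow> complex" where
  "mtr A = (\<Sum>i\<in>UNIV. A $ i $ i)"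

definition out_state :: "('n \<Rightarrow> real) \<Rightarrow> ('n \<Rightarrow> complex ^ 'n) \<Rightarrow> complex ^ 'n ^ 'n" where
  "out_state p w = (\<Sum>k\<in>UNIV. p k *\<^sub>R ketbra (w k) (w k))"

definition C_Ups :: "('n \<Rightarrow> complex ^ 'n ^ 'n) \<Rightarrow> complex ^ 'n ^ 'n \<Rightarrow> real" where
  "C_Ups dU rho0 = 4 * Re (\<Sum>k\<in>UNIV. mtr (dU k ** rho0 ** dagger (dU k)))"

text \<open>SLD quantum information tr(rho lambda^2) for a given SLD lambda (the trace is real).\<close>
definition sld_info :: "complex ^ 'n ^ 'n \<Rightarrow> complex ^ 'n ^ 'n \<Rightarrow> real" where
  "sld_info rho L = Re (mtr (rho ** (L ** L)))"

end

theory Submission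
  imports Defs
begin


lemma cscaleR: "r *\<^sub>R (z::complex) = of_real r * z"
  by (simp add: scaleR_conv_of_real)

lemma braket_add_right: "braket x (y + z) = braket x y + braket x z"
  by (simp add: braket_def algebra_simps sum.distrib)
lemma braket_add_left: "braket (x + y) z = braket x z + braket y z"
  by (simp add: braket_def algebra_simps sum.distrib)
lemma braket_scale_right: "braket x (c *s y) = c * braket x y"
  by (simp add: braket_def sum_distrib_left algebra_simps)
lemma braket_scale_left: "braket (c *s x) y = cnj c * braket x y"
  by (simp add: braket_def sum_distrib_left algebra_simps)
lemma braket_scaleR_right: "braket x (r *\<^sub>R y) = r *\<^sub>R braket x y"
  by (simp add: braket_def scaleR_sum_right)
lemma braket_scaleR_left: "braket (r *\<^sub>R x) y = r *\<^sub>R braket x y"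
  unfolding braket_def scaleR_sum_right by (rule sum.cong) (auto simp: cscaleR)
lemma braket_cnj: "cnj (braket x y) = braket y x"
  by (simp add: braket_def mult.commute)
lemma braket_sum_right: "braket x (\<Sum>k\<in>S. f k) = (\<Sum>k\<in>S. braket x (f k))"
  by (simp add: braket_def sum_distrib_left sum.swap[of _ S] )
lemma braket_self_real: "braket x x = of_real (\<Sum>i\<in>UNIV. (cmod (x $ i))^2)"
  unfolding braket_def of_real_sum
  by (rule sum.cong) (auto simp: mult.commute complex_mult_cnj cmod_power2 simp del: of_real_power)

lemma bilinear_braket: "bilinear braket"
  unfolding bilinear_def
  by (auto intro!: linearI simp: braket_add_left braket_add_right braket_scaleR_left braket_scaleR_right)

lemma bounded_bilinear_braket: "bounded_bilinear braket"
  using bilinear_braket bilinear_conv_bounded_bilinear by blast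

lemma ketbra_mult_vec: "ketbra x y *v v = braket y v *s x"
  by (simp add: ketbra_def braket_def matrix_vector_mult_def vec_eq_iff sum_distrib_left algebra_simps)

lemma braket_dagger: "braket x (A *v y) = braket (dagger A *v x) y"
proof -
  have "braket x (A *v y) = (\<Sum>i\<in>UNIV. \<Sum>j\<in>UNIV. cnj (x $ i) * A $ i $ j * y $ j)"
    by (simp add: braket_def matrix_vector_mult_def sum_distrib_left mult.assoc)
  also have "\<dots> = (\<Sum>j\<in>UNIV. \<Sum>i\<in>UNIV. cnj (x $ i) * A $ i $ j * y $ j)"
    by (rule sum.swap)
  also have "\<dots> = braket (dagger A *v x) y"
    by (simp add: braket_def dagger_def matrix_vector_mult_def sum_distrib_right mult.commute mult.left_commute sum_distrib_left)
  finally show ?thesis .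
qed

lemma mtr_sandwich: "mtr (A ** ketbra psi psi ** dagger A) = braket (A *v psi) (A *v psi)"
  by (simp add: mtr_def ketbra_def dagger_def braket_def matrix_matrix_mult_def matrix_vector_mult_def
      sum_distrib_left sum_distrib_right algebra_simps)

lemma mat_scaleR_nth: "(r *\<^sub>R M) $ i $ j = of_real r * (M :: complex^'n^'n) $ i $ j"
  by (simp add: cscaleR)

lemma mtr_sum_mult: "mtr ((\<Sum>k\<in>S. A k) ** X) = (\<Sum>k\<in>S. mtr (A k ** X))"
  by (simp add: mtr_def matrix_matrix_mult_def sum_distrib_right sum.swap[of _ S])

lemma mtr_scaleR_mult: "mtr ((r *\<^sub>R A) ** X) = of_real r * mtr (A ** X)"
  unfolding mtr_def matrix_matrix_mult_def of_real_def
  by (simp add: sum_distrib_left mult.assoc)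

lemma mtr_ketbra_mult: "mtr (ketbra x x ** X) = braket x (X *v x)"
proof -
  have "mtr (ketbra x x ** X) = (\<Sum>i\<in>UNIV. \<Sum>k\<in>UNIV. cnj (x $ k) * (X $ k $ i * x $ i))"
    by (simp add: mtr_def ketbra_def matrix_matrix_mult_def mult_ac)
  also have "\<dots> = (\<Sum>k\<in>UNIV. \<Sum>i\<in>UNIV. cnj (x $ k) * (X $ k $ i * x $ i))"
    by (rule sum.swap)
  also have "\<dots> = braket x (X *v x)"
    by (simp add: braket_def matrix_vector_mult_def sum_distrib_left)
  finally show ?thesis .
qed

lemma mtr_out_state: "mtr (out_state p w ** X) = (\<Sum>m\<in>UNIV. of_real (p m) * braket (w m) (X *v w m))"
  by (simp add: out_state_def mtr_sum_mult mtr_scaleR_mult mtr_ketbra_mult)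

lemma matvec_sum: "(\<Sum>k\<in>S. A k) *v v = (\<Sum>k\<in>S. A k *v v)"
  by (simp add: matrix_vector_mult_def vec_eq_iff sum_distrib_right sum.swap[of _ S])

lemma scaleR_matvec: "(r *\<^sub>R A) *v v = r *\<^sub>R (A *v (v::complex^'n))"
  unfolding matrix_vector_mult_def by (simp add: vec_eq_iff scaleR_sum_right)

lemma out_state_vec: "out_state p w *v v = (\<Sum>m\<in>UNIV. (of_real (p m) * braket (w m) v) *s w m)"
  unfolding out_state_def matvec_sum scaleR_matvec ketbra_mult_vec
  by (simp add: vec_eq_iff cscaleR mult.assoc)



lemma parseval_expand:
  fixes w :: "'n \<Rightarrow> complex^'n"
  assumes on: "\<And>j k. braket (w j) (w k) = (if j = k then 1 else 0)"
  shows "x = (\<Sum>k\<in>UNIV. braket (w k) x *s w k)"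
proof -
  define W :: "complex^'n^'n" where "W = (\<chi> i k. w k $ i)"
  have "dagger W ** W = mat 1"
    using on by (simp add: W_def dagger_def matrix_matrix_mult_def mat_def vec_eq_iff braket_def)
  hence WW: "W ** dagger W = mat 1" by (simp add: matrix_left_right_inverse)
  have "x = (W ** dagger W) *v x" by (simp add: WW)
  also have "\<dots> = W *v (dagger W *v x)" by (simp add: matrix_vector_mul_assoc)
  also have "\<dots> = (\<Sum>k\<in>UNIV. braket (w k) x *s w k)"
    by (simp add: W_def dagger_def matrix_vector_mult_def vec_eq_iff braket_def mult.commute)
  finally show ?thesis .
qed

lemma parseval:
  fixes w :: "'n \<Rightarrow> complex^'n"
  assumes on: "\<And>j k. braket (w j) (w k) = (if j = k then 1 else 0)"
  shows "braket x y = (\<Sum>k\<in>UNIV. braket x (w k) * braket (w k) y)"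
  apply (subst parseval_expand[OF on, of y])
  by (simp add: braket_sum_right braket_scale_right mult.commute)

lemma deriv_braket:
  assumes "(f has_vector_derivative f') (at t)" "(g has_vector_derivative g') (at t)"
  shows "((\<lambda>s. braket (f s) (g s)) has_vector_derivative (braket (f t) g' + braket f' (g t))) (at t)"
  using bounded_bilinear.has_vector_derivative[OF bounded_bilinear_braket assms] .

lemma bl_matvec: "bounded_linear (\<lambda>A::complex^'n^'n. A *v v)"
  unfolding linear_conv_bounded_linear[symmetric]
  by (rule linearI) (simp_all add: matrix_vector_mult_def vec_eq_iff sum.distrib algebra_simps cscaleR sum_distrib_left)

lemma deriv_matvec:
  fixes U :: "real \<Rightarrow> complex^'n^'n"
  assumes "(U has_vector_derivative U') (at t)"
  shows "((\<lambda>s. U s *v v) has_vector_derivative (U' *v v)) (at t)"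
  using bounded_linear.has_vector_derivative[OF bl_matvec assms] .

lemma bl_sandwich: "bounded_linear (\<lambda>A::complex^'n^'n. braket a (A *v b))"
  unfolding linear_conv_bounded_linear[symmetric]
  by (rule linearI) (simp_all add: braket_def matrix_vector_mult_def sum.distrib algebra_simps cscaleR sum_distrib_left)

lemma deriv_const_open:
  assumes "(f has_vector_derivative f') (at t)" "open S" "t \<in> S" "\<And>s. s \<in> S \<Longrightarrow> f s = c"
  shows "f' = 0"
proof -
  have "((\<lambda>s. c) has_vector_derivative 0) (at t)" by simp
  hence "(f has_vector_derivative 0) (at t)"
    by (rule has_vector_derivative_transform_within_open[OF _ assms(2,3)]) (simp add: assms(4))
  thus ?thesis using assms(1) vector_derivative_unique_at by blast
qed

lemma deriv_real_open:
  fixes f :: "real \<Rightarrow> complex"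
  assumes "(f has_vector_derivative f') (at t)" "open S" "t \<in> S" "\<And>s. s \<in> S \<Longrightarrow> Im (f s) = 0"
  shows "Im f' = 0"
proof -
  have "((\<lambda>s. Im (f s)) has_vector_derivative Im f') (at t)"
    using bounded_linear.has_vector_derivative[OF bounded_linear_Im assms(1)] .
  thus ?thesis using deriv_const_open assms by blast
qed



lemma offdiag_term:
  fixes Pk Pm :: real and z l a :: complex
  assumes "Pk \<ge> 0" "Pm \<ge> 0" "z = of_real (sqrt Pm) * a"
    and "of_real ((Pk + Pm)/2) * l = of_real (Pm - Pk) * a"
  shows "Pm * (cmod l)^2 \<le> 4 * (cmod z)^2 \<and> (Pm * (cmod l)^2 = 4 * (cmod z)^2 \<longleftrightarrow> (Pk > 0 \<and> Pm > 0 \<longrightarrow> a = 0))"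
proof (cases "Pm = 0")
  case True thus ?thesis using assms by simp
next
  case False
  hence Pm: "Pm > 0" using assms by simp
  have cz: "(cmod z)^2 = Pm * (cmod a)^2"
    using assms(2,3) by (simp add: norm_mult power_mult_distrib)
  have "cmod (of_real ((Pk + Pm)/2) * l) = cmod (of_real (Pm - Pk) * a)" using assms(4) by (rule arg_cong)
  hence "\<bar>(Pk + Pm)/2\<bar> * cmod l = \<bar>Pm - Pk\<bar> * cmod a"
    unfolding norm_mult norm_of_real .
  hence cl: "((Pk + Pm)/2) * cmod l = \<bar>Pm - Pk\<bar> * cmod a"
    using assms Pm by simp
  have "((Pk + Pm)/2)^2 * (cmod l)^2 = (Pm - Pk)^2 * (cmod a)^2"
  proof -
    have "(((Pk + Pm)/2) * cmod l)^2 = (\<bar>Pm - Pk\<bar> * cmod a)^2" using cl by simp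
    thus ?thesis by (simp only: power_mult_distrib power2_abs)
  qed
  hence cl2: "(Pk + Pm)^2 * (cmod l)^2 = 4 * (Pm - Pk)^2 * (cmod a)^2"
    by (simp add: power_divide field_simps)
  define A where "A = (cmod a)^2"
  define B where "B = (cmod l)^2"
  have A0: "A \<ge> 0" "B \<ge> 0" by (simp_all add: A_def B_def)
  have S: "(Pk+Pm)^2 > 0" using Pm assms by simp
  have key: "(Pk+Pm)^2 * (Pm * B) = Pm * 4 * (Pm - Pk)^2 * A"
    using cl2 by (simp add: A_def B_def algebra_simps)
  have ineq: "(Pm - Pk)^2 * A \<le> (Pk+Pm)^2 * A"
    using assms A0 by (intro mult_right_mono) (auto simp: power2_eq_square algebra_simps)
  have le: "Pm * B \<le> 4 * Pm * A"
  proof -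
    have "(Pk+Pm)^2 * (Pm * B) \<le> (Pk+Pm)^2 * (4 * Pm * A)"
      using key ineq Pm by (simp add: algebra_simps mult_left_mono)
    thus ?thesis using S by (simp add: mult_le_cancel_left)
  qed
  have eq: "Pm * B = 4 * Pm * A \<longleftrightarrow> (Pk > 0 \<longrightarrow> A = 0)"
  proof -
    have "Pm * B = 4 * Pm * A \<longleftrightarrow> (Pk+Pm)^2 * (Pm * B) = (Pk+Pm)^2 * (4 * Pm * A)"
      using S by simp
    also have "\<dots> \<longleftrightarrow> Pm * 4 * (4 * Pk * Pm) * A = 0"
    proof -
      have eqv: "(Pk+Pm)^2 * (4 * Pm * A) - Pm * 4 * (Pm - Pk)^2 * A = Pm * 4 * (4 * Pk * Pm) * A"
        by (simp add: power2_eq_square algebra_simps)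
      show ?thesis using key eqv by linarith
    qed
    also have "\<dots> \<longleftrightarrow> (Pk > 0 \<longrightarrow> A = 0)"
      using Pm assms(1) by auto
    finally show ?thesis .
  qed
  show ?thesis using le eq cz Pm by (simp add: A_def B_def)
qed

lemma diag_term:
  fixes P Qr :: real and z l a :: complex
  assumes "P \<ge> 0" "P = 0 \<Longrightarrow> z = 0" "of_real P * l = of_real Qr"
    and "P > 0 \<Longrightarrow> (cmod z)^2 = Qr^2 / (4 * P) + P * (cmod a)^2"
  shows "P * (cmod l)^2 \<le> 4 * (cmod z)^2 \<and> (P * (cmod l)^2 = 4 * (cmod z)^2 \<longleftrightarrow> (P > 0 \<longrightarrow> a = 0))"
proof (cases "P = 0")
  case True thus ?thesis using assms by simp
next
  case False
  hence P: "P > 0" using assms by simp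
  have "l = of_real (Qr / P)" using assms(3) P by (simp add: field_simps)
  hence "P * (cmod l)^2 = P * (Qr / P)^2" by (simp only: norm_of_real power2_abs)
  hence "P * (cmod l)^2 = Qr^2 / P" using P by (simp add: power2_eq_square)
  moreover have "4 * (cmod z)^2 = Qr^2 / P + 4 * P * (cmod a)^2" using assms(4)[OF P] P by (simp add: field_simps)
  ultimately show ?thesis using P by auto
qed

lemma sum_le_eq_iff:
  fixes f g :: "'a \<Rightarrow> real"
  assumes "finite S" "\<And>i. i \<in> S \<Longrightarrow> f i \<le> g i"
  shows "sum f S \<le> sum g S \<and> (sum f S = sum g S \<longleftrightarrow> (\<forall>i\<in>S. f i = g i))"
proof -
  have "sum f S = sum g S \<longleftrightarrow> sum g S - sum f S = 0" by linarith
  also have "\<dots> \<longleftrightarrow> sum (\<lambda>i. g i - f i) S = 0" by (simp only: sum_subtractf)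
  also have "\<dots> \<longleftrightarrow> (\<forall>i\<in>S. g i - f i = 0)" using assms by (intro sum_nonneg_eq_0_iff) auto
  finally show ?thesis using assms sum_mono by auto
qed



lemma braket_zero_right[simp]: "braket x 0 = 0" by (simp add: braket_def)
lemma braket_zero_left[simp]: "braket 0 x = 0" by (simp add: braket_def)
lemma braket_uminus_left: "braket (- x) y = - braket x y" by (simp add: braket_def sum_negf)

lemma cnj_mult_self: "cnj z * z = of_real ((cmod z)^2)"
  by (metis complex_norm_square mult.commute)

lemma delta_sum1: fixes f :: "'a::finite \<Rightarrow> complex" shows "(\<Sum>j\<in>UNIV. (if k = j then (1::complex) else 0) * f j) = f k"
proof -
  have "(\<Sum>j\<in>UNIV. (if k = j then (1::complex) else 0) * f j) = (\<Sum>j\<in>UNIV. if k = j then f j else 0)"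
    by (rule sum.cong) auto
  thus ?thesis by simp
qed
lemma delta_sum2: fixes f :: "'a::finite \<Rightarrow> complex" shows "(\<Sum>j\<in>UNIV. f j * (if j = m then (1::complex) else 0)) = f m"
proof -
  have "(\<Sum>j\<in>UNIV. f j * (if j = m then (1::complex) else 0)) = (\<Sum>j\<in>UNIV. if j = m then f j else 0)"
    by (rule sum.cong) auto
  thus ?thesis by simp
qed

theorem theorem2p3:
  fixes \<Theta> :: "real set"
    and psi0 :: "complex ^ 'n"
    and Ups dUps :: "real \<Rightarrow> 'n \<Rightarrow> complex ^ 'n ^ 'n"
    and w dw :: "real \<Rightarrow> 'n \<Rightarrow> complex ^ 'n"
    and p :: "real \<Rightarrow> 'n \<Rightarrow> real"
  assumes Theta: "open \<Theta>" "is_interval \<Theta>" "\<Theta> \<noteq> {}"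
    and psi0_norm: "braket psi0 psi0 = 1"
    and kraus_complete: "\<And>t. t \<in> \<Theta> \<Longrightarrow> (\<Sum>k\<in>UNIV. dagger (Ups t k) ** Ups t k) = mat 1"
    and canonical: "\<And>t j k. t \<in> \<Theta> \<Longrightarrow>
        mtr (Ups t k ** ketbra psi0 psi0 ** dagger (Ups t j)) = (if j = k then complex_of_real (p t k) else 0)"
    and Ups_psi0: "\<And>t k. t \<in> \<Theta> \<Longrightarrow> Ups t k *v psi0 = complex_of_real (sqrt (p t k)) *s w t k"
    and w_orthonormal: "\<And>t j k. t \<in> \<Theta> \<Longrightarrow> braket (w t j) (w t k) = (if j = k then 1 else 0)"
    and Ups_deriv: "\<And>t k. t \<in> \<Theta> \<Longrightarrow> ((\<lambda>s. Ups s k) has_vector_derivative dUps t k) (at t)"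
    and w_deriv: "\<And>t k. t \<in> \<Theta> \<Longrightarrow> ((\<lambda>s. w s k) has_vector_derivative dw t k) (at t)"
    and p_dichotomy: "\<And>k. (\<forall>t\<in>\<Theta>. p t k = 0) \<or> (\<forall>t\<in>\<Theta>. p t k > 0)"
    and theta: "\<theta> \<in> \<Theta>"
    and L_herm: "dagger L = L"
    and L_sld: "((\<lambda>s. out_state (p s) (w s)) has_vector_derivative
                  (1/2) *\<^sub>R (out_state (p \<theta>) (w \<theta>) ** L + L ** out_state (p \<theta>) (w \<theta>))) (at \<theta>)"
  shows "sld_info (out_state (p \<theta>) (w \<theta>)) L \<le> C_Ups (dUps \<theta>) (ketbra psi0 psi0)
    \<and> (sld_info (out_state (p \<theta>) (w \<theta>)) L = C_Ups (dUps \<theta>) (ketbra psi0 psi0)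
       \<longleftrightarrow> (\<forall>j k. p \<theta> j > 0 \<and> p \<theta> k > 0 \<longrightarrow> braket (dw \<theta> j) (w \<theta> k) = 0))"
proof -
  define wt where "wt = w \<theta>"
  define P where "P = p \<theta>"
  define a where "a k m = braket (wt k) (dw \<theta> m)" for k m
  define u where "u m = dUps \<theta> m *v psi0" for m
  define l where "l k m = braket (wt k) (L *v wt m)" for k m
  define V where "V s m = Ups s m *v psi0" for s m
  define \<rho> where "\<rho> = out_state P wt"
  have on: "\<And>j k. braket (wt j) (wt k) = (if j = k then 1 else 0)"
    unfolding wt_def using w_orthonormal[OF theta] .
  have pnn: "\<And>s m. s \<in> \<Theta> \<Longrightarrow> p s m \<ge> 0"
  proof -
    fix s and m :: 'n assume s: "s \<in> \<Theta>"
    from p_dichotomy[of m] show "p s m \<ge> 0"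
    proof
      assume "\<forall>t\<in>\<Theta>. p t m = 0" thus ?thesis using s by simp
    next
      assume "\<forall>t\<in>\<Theta>. p t m > 0" thus ?thesis using s by (simp add: less_imp_le)
    qed
  qed
  have Pnn: "\<And>m. P m \<ge> 0" unfolding P_def using pnn theta by blast
  have F1: "\<And>j k. braket (dw \<theta> j) (wt k) = - a j k"
  proof -
    fix j k :: 'n
    have d: "((\<lambda>s. braket (w s j) (w s k)) has_vector_derivative
        (braket (wt j) (dw \<theta> k) + braket (dw \<theta> j) (wt k))) (at \<theta>)"
      unfolding wt_def by (rule deriv_braket[OF w_deriv[OF theta] w_deriv[OF theta]])
    have "braket (wt j) (dw \<theta> k) + braket (dw \<theta> j) (wt k) = 0"
      by (rule deriv_const_open[OF d Theta(1) theta, of "if j = k then 1 else 0"])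
         (simp add: w_orthonormal)
    thus "braket (dw \<theta> j) (wt k) = - a j k" by (simp add: a_def eq_neg_iff_add_eq_0 add.commute[of "braket (dw \<theta> j) (wt k)"])
  qed
  have Vd: "\<And>m. ((\<lambda>s. V s m) has_vector_derivative u m) (at \<theta>)"
    unfolding V_def u_def by (rule deriv_matvec[OF Ups_deriv[OF theta]])
  have Vth: "\<And>m. V \<theta> m = of_real (sqrt (P m)) *s wt m"
    unfolding V_def P_def wt_def using Ups_psi0[OF theta] .
  define Q where "Q m = braket (V \<theta> m) (u m) + braket (u m) (V \<theta> m)" for m
  have qd: "\<And>m. ((\<lambda>s. braket (V s m) (V s m)) has_vector_derivative Q m) (at \<theta>)"
    unfolding Q_def using deriv_braket[OF Vd Vd] by (simp add: add.commute)
  have qeq: "\<And>s m. s \<in> \<Theta> \<Longrightarrow> braket (V s m) (V s m) = of_real (p s m)"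
  proof -
    fix s and m :: 'n assume s: "s \<in> \<Theta>"
    have "braket (V s m) (V s m) = of_real (sqrt (p s m)) * of_real (sqrt (p s m))"
      using Ups_psi0[OF s] w_orthonormal[OF s]
      by (simp add: V_def braket_scale_left braket_scale_right)
    also have "\<dots> = of_real (p s m)" using pnn[OF s] by (simp flip: of_real_mult)
    finally show "braket (V s m) (V s m) = of_real (p s m)" .
  qed
  have Qreal: "\<And>m. Q m = of_real (Re (Q m))"
  proof -
    fix m :: 'n
    have "Q m = braket (V \<theta> m) (u m) + cnj (braket (V \<theta> m) (u m))"
      by (simp add: Q_def braket_cnj)
    thus "Q m = of_real (Re (Q m))" by (simp add: complex_eq_iff)
  qed
  have u0: "\<And>m. P m = 0 \<Longrightarrow> u m = 0"
  proof -
    fix m :: 'n assume "P m = 0"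
    hence z: "\<forall>t\<in>\<Theta>. p t m = 0" using p_dichotomy[of m] theta by (auto simp: P_def)
    show "u m = 0"
      by (rule deriv_const_open[OF Vd[of m] Theta(1) theta, of 0]) (simp add: V_def Ups_psi0 z)
  qed
  have F5: "\<And>k m. k \<noteq> m \<Longrightarrow> braket (wt k) (u m) = of_real (sqrt (P m)) * a k m"
  proof -
    fix k m :: 'n assume km: "k \<noteq> m"
    have d: "((\<lambda>s. braket (w s k) (V s m)) has_vector_derivative
        (braket (wt k) (u m) + braket (dw \<theta> k) (V \<theta> m))) (at \<theta>)"
      unfolding wt_def by (rule deriv_braket[OF w_deriv[OF theta] Vd])
    have "braket (wt k) (u m) + braket (dw \<theta> k) (V \<theta> m) = 0"
      by (rule deriv_const_open[OF d Theta(1) theta, of 0])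
         (simp add: V_def Ups_psi0 braket_scale_right w_orthonormal km)
    thus "braket (wt k) (u m) = of_real (sqrt (P m)) * a k m"
      by (simp add: Vth braket_scale_right F1 add_eq_0_iff2 eq_neg_iff_add_eq_0)
  qed
  have F6: "\<And>m. P m > 0 \<Longrightarrow> (cmod (braket (wt m) (u m)))^2 = (Re (Q m))^2 / (4 * P m) + P m * (cmod (a m m))^2"
  proof -
    fix m :: 'n assume Pm: "P m > 0"
    define z where "z = braket (wt m) (u m)"
    define sp where "sp = sqrt (P m)"
    have sp: "sp > 0" "sp * sp = P m" using Pm by (simp_all add: sp_def)
    have d: "((\<lambda>s. braket (w s m) (V s m)) has_vector_derivative
        (braket (wt m) (u m) + braket (dw \<theta> m) (V \<theta> m))) (at \<theta>)"
      unfolding wt_def by (rule deriv_braket[OF w_deriv[OF theta] Vd])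
    have "Im (braket (wt m) (u m) + braket (dw \<theta> m) (V \<theta> m)) = 0"
      by (rule deriv_real_open[OF d Theta(1) theta])
         (simp add: V_def Ups_psi0 braket_scale_right w_orthonormal)
    hence imz: "Im z = sp * Im (a m m)"
      by (simp add: z_def Vth braket_scale_right F1 sp_def)
    have "Q m = of_real sp * z + of_real sp * cnj z"
      by (simp add: Q_def Vth braket_scale_right braket_scale_left z_def braket_cnj sp_def)
    hence rez: "Re (Q m) = 2 * sp * Re z" by simp
    have rea: "Re (a m m) = 0"
    proof -
      have "cnj (a m m) = - a m m" using F1[of m m] by (simp add: a_def braket_cnj)
      thus ?thesis by (simp add: complex_eq_iff)
    qed
    have "(cmod z)^2 = (Re z)^2 + (Im z)^2" by (simp add: cmod_power2)
    also have "\<dots> = (Re (Q m))^2 / (4 * P m) + P m * (cmod (a m m))^2"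
    proof -
      have ca: "(cmod (a m m))^2 = (Im (a m m))^2" using rea by (simp add: cmod_power2)
      show ?thesis unfolding ca rez imz sp(2)[symmetric] using sp(1)
        by (simp add: power2_eq_square field_simps)
    qed
    finally show "(cmod (braket (wt m) (u m)))^2 = (Re (Q m))^2 / (4 * P m) + P m * (cmod (a m m))^2"
      by (simp add: z_def)
  qed
  have rho_eq: "out_state (p \<theta>) (w \<theta>) = \<rho>" by (simp add: \<rho>_def P_def wt_def)
  have rho_br: "\<And>x y. braket x (\<rho> *v y) = (\<Sum>j\<in>UNIV. of_real (P j) * braket (wt j) y * braket x (wt j))"
    by (simp add: \<rho>_def out_state_vec braket_sum_right braket_scale_right mult_ac)
  have rho_left: "\<And>y k. braket (wt k) (\<rho> *v y) = of_real (P k) * braket (wt k) y"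
  proof -
    fix y and k :: 'n
    have "(\<Sum>j\<in>UNIV. of_real (P j) * braket (wt j) y * braket (wt k) (wt j))
        = (\<Sum>j\<in>UNIV. if j = k then of_real (P k) * braket (wt k) y else 0)"
      by (rule sum.cong) (auto simp: on)
    thus "braket (wt k) (\<rho> *v y) = of_real (P k) * braket (wt k) y" by (simp add: rho_br)
  qed
  have rho_right: "\<And>x m. braket x (\<rho> *v wt m) = of_real (P m) * braket x (wt m)"
  proof -
    fix x and m :: 'n
    have "(\<Sum>j\<in>UNIV. of_real (P j) * braket (wt j) (wt m) * braket x (wt j))
        = (\<Sum>j\<in>UNIV. if j = m then of_real (P m) * braket x (wt m) else 0)"
      by (rule sum.cong) (auto simp: on)
    thus "braket x (\<rho> *v wt m) = of_real (P m) * braket x (wt m)" by (simp add: rho_br)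
  qed
  have Lsym: "\<And>x y. braket (L *v x) y = braket x (L *v y)"
    using braket_dagger L_herm by metis
  have F7: "\<And>k m. of_real ((P k + P m)/2) * l k m = (if k = m then Q m else 0) + of_real (P m - P k) * a k m"
  proof -
    fix k m :: 'n
    define g where "g s = braket (wt k) (out_state (p s) (w s) *v wt m)" for s
    define R where "R = (1/2) *\<^sub>R (\<rho> ** L + L ** \<rho>)"
    have D1: "(g has_vector_derivative braket (wt k) (R *v wt m)) (at \<theta>)"
      unfolding g_def R_def using bounded_linear.has_vector_derivative[OF bl_sandwich L_sld]
      by (simp add: rho_eq)
    have v1: "braket (wt k) (R *v wt m) = of_real ((P k + P m)/2) * l k m"
    proof -
      have "braket (wt k) (R *v wt m) = (1/2) *\<^sub>R (braket (wt k) (\<rho> *v (L *v wt m)) + braket (wt k) (L *v (\<rho> *v wt m)))"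
        by (simp add: R_def scaleR_matvec matrix_vector_mult_add_rdistrib matrix_vector_mul_assoc
            braket_scaleR_right braket_add_right)
      also have "\<dots> = (1/2) *\<^sub>R (of_real (P k) * l k m + of_real (P m) * l k m)"
        by (simp add: rho_left l_def flip: Lsym) (simp add: rho_right Lsym)
      also have "\<dots> = of_real ((P k + P m)/2) * l k m"
        by (simp add: cscaleR algebra_simps)
      finally show ?thesis .
    qed
    define G where "G s = (\<Sum>j\<in>UNIV. braket (V s j) (V s j) * (braket (wt k) (w s j) * braket (w s j) (wt m)))" for s
    have gG: "\<And>s. s \<in> \<Theta> \<Longrightarrow> G s = g s"
      by (simp add: G_def g_def qeq out_state_vec braket_sum_right braket_scale_right mult_ac)
    have D2: "(G has_vector_derivative (\<Sum>j\<in>UNIV. braket (V \<theta> j) (V \<theta> j) *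
         (braket (wt k) (wt j) * (braket (wt j) 0 + braket (dw \<theta> j) (wt m)) +
          (braket (wt k) (dw \<theta> j) + braket 0 (wt j)) * braket (wt j) (wt m)) +
         Q j * (braket (wt k) (wt j) * braket (wt j) (wt m)))) (at \<theta>)"
      unfolding G_def wt_def
      by (rule has_vector_derivative_sum, rule has_vector_derivative_mult[OF qd has_vector_derivative_mult[OF
          deriv_braket[OF has_vector_derivative_const w_deriv[OF theta]]
          deriv_braket[OF w_deriv[OF theta] has_vector_derivative_const]]])
    hence D2': "(g has_vector_derivative (\<Sum>j\<in>UNIV. braket (V \<theta> j) (V \<theta> j) *
         (braket (wt k) (wt j) * (braket (wt j) 0 + braket (dw \<theta> j) (wt m)) +
          (braket (wt k) (dw \<theta> j) + braket 0 (wt j)) * braket (wt j) (wt m)) +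
         Q j * (braket (wt k) (wt j) * braket (wt j) (wt m)))) (at \<theta>)"
      by (rule has_vector_derivative_transform_within_open[OF _ Theta(1) theta]) (simp add: gG)
    have v2: "(\<Sum>j\<in>UNIV. braket (V \<theta> j) (V \<theta> j) *
         (braket (wt k) (wt j) * (braket (wt j) 0 + braket (dw \<theta> j) (wt m)) +
          (braket (wt k) (dw \<theta> j) + braket 0 (wt j)) * braket (wt j) (wt m)) +
         Q j * (braket (wt k) (wt j) * braket (wt j) (wt m)))
       = (\<Sum>j\<in>UNIV. (if j = k then of_real (P k) * braket (dw \<theta> k) (wt m) else 0)
            + (if j = m then of_real (P m) * a k m else 0) + (if j = k \<and> j = m then Q m else 0))"
      by (rule sum.cong) (auto simp: on qeq[OF theta] P_def a_def distrib_left)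
    have "braket (wt k) (R *v wt m) = (\<Sum>j\<in>UNIV. (if j = k then of_real (P k) * braket (dw \<theta> k) (wt m) else 0)
            + (if j = m then of_real (P m) * a k m else 0) + (if j = k \<and> j = m then Q m else 0))"
      using vector_derivative_unique_at[OF D1 D2'] v2 by simp
    also have "\<dots> = of_real (P k) * braket (dw \<theta> k) (wt m) + of_real (P m) * a k m + (if k = m then Q m else 0)"
    proof -
      have "(\<Sum>j\<in>UNIV. if j = k \<and> j = m then Q m else 0) = (if k = m then Q m else 0)"
        by (cases "k = m") (auto intro!: sum.neutral)
      thus ?thesis by (simp add: sum.distrib)
    qed
    finally show "of_real ((P k + P m)/2) * l k m = (if k = m then Q m else 0) + of_real (P m - P k) * a k m"
      using v1 F1 by (simp add: algebra_simps)
  qed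
  define h where "h k m = P m * (cmod (l k m))^2" for k m
  define c where "c k m = 4 * (cmod (braket (wt k) (u m)))^2" for k m
  have Hsum: "sld_info (out_state (p \<theta>) (w \<theta>)) L = (\<Sum>m\<in>UNIV. \<Sum>k\<in>UNIV. h k m)"
  proof -
    have e: "\<And>m. braket (wt m) ((L ** L) *v wt m) = of_real (\<Sum>k\<in>UNIV. (cmod (l k m))^2)"
    proof -
      fix m :: 'n
      have "braket (wt m) ((L ** L) *v wt m) = braket (L *v wt m) (L *v wt m)"
        by (simp add: Lsym matrix_vector_mul_assoc[symmetric])
      also have "\<dots> = (\<Sum>k\<in>UNIV. braket (L *v wt m) (wt k) * braket (wt k) (L *v wt m))"
        by (rule parseval[OF on])
      also have "\<dots> = (\<Sum>k\<in>UNIV. of_real ((cmod (l k m))^2))"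
      proof (rule sum.cong[OF refl])
        fix k
        have "braket (L *v wt m) (wt k) = cnj (l k m)" unfolding l_def by (rule braket_cnj[symmetric])
        thus "braket (L *v wt m) (wt k) * braket (wt k) (L *v wt m) = of_real ((cmod (l k m))^2)"
          by (simp add: cnj_mult_self l_def)
      qed
      finally show "braket (wt m) ((L ** L) *v wt m) = of_real (\<Sum>k\<in>UNIV. (cmod (l k m))^2)" by simp
    qed
    show ?thesis
      by (simp add: sld_info_def rho_eq \<rho>_def mtr_out_state e h_def sum_distrib_left flip: of_real_mult of_real_sum)
  qed
  have Csum: "C_Ups (dUps \<theta>) (ketbra psi0 psi0) = (\<Sum>m\<in>UNIV. \<Sum>k\<in>UNIV. c k m)"
  proof -
    have e: "\<And>m. braket (u m) (u m) = of_real (\<Sum>k\<in>UNIV. (cmod (braket (wt k) (u m)))^2)"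
    proof -
      fix m :: 'n
      have "braket (u m) (u m) = (\<Sum>k\<in>UNIV. braket (u m) (wt k) * braket (wt k) (u m))"
        by (rule parseval[OF on])
      also have "\<dots> = (\<Sum>k\<in>UNIV. of_real ((cmod (braket (wt k) (u m)))^2))"
      proof (rule sum.cong[OF refl])
        fix k
        have "braket (u m) (wt k) = cnj (braket (wt k) (u m))" by (rule braket_cnj[symmetric])
        thus "braket (u m) (wt k) * braket (wt k) (u m) = of_real ((cmod (braket (wt k) (u m)))^2)"
          by (simp add: cnj_mult_self)
      qed
      finally show "braket (u m) (u m) = of_real (\<Sum>k\<in>UNIV. (cmod (braket (wt k) (u m)))^2)" by simp
    qed
    show ?thesis
      by (simp add: C_Ups_def mtr_sandwich u_def[symmetric] e c_def sum_distrib_left flip: of_real_sum)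
  qed
  have termw: "\<And>k m. h k m \<le> c k m \<and> (h k m = c k m \<longleftrightarrow> (P k > 0 \<and> P m > 0 \<longrightarrow> a k m = 0))"
  proof -
    fix k m :: 'n
    show "h k m \<le> c k m \<and> (h k m = c k m \<longleftrightarrow> (P k > 0 \<and> P m > 0 \<longrightarrow> a k m = 0))"
    proof (cases "k = m")
      case False
      show ?thesis unfolding h_def c_def
        by (rule offdiag_term[OF Pnn Pnn F5[OF False]]) (use F7[of k m] False in simp)
    next
      case True
      have "P m * (cmod (l m m))^2 \<le> 4 * (cmod (braket (wt m) (u m)))^2 \<and>
        (P m * (cmod (l m m))^2 = 4 * (cmod (braket (wt m) (u m)))^2 \<longleftrightarrow> (P m > 0 \<longrightarrow> a m m = 0))"
      proof (rule diag_term[OF Pnn])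
        show "P m = 0 \<Longrightarrow> braket (wt m) (u m) = 0" using u0 by simp
        show "of_real (P m) * l m m = of_real (Re (Q m))" using F7[of m m] Qreal[of m] by simp
        show "0 < P m \<Longrightarrow> (cmod (braket (wt m) (u m)))\<^sup>2 = (Re (Q m))\<^sup>2 / (4 * P m) + P m * (cmod (a m m))\<^sup>2"
          by (rule F6)
      qed
      thus ?thesis using True by (simp add: h_def c_def)
    qed
  qed
  have inner: "\<And>m. (\<Sum>k\<in>UNIV. h k m) \<le> (\<Sum>k\<in>UNIV. c k m) \<and>
      ((\<Sum>k\<in>UNIV. h k m) = (\<Sum>k\<in>UNIV. c k m) \<longleftrightarrow> (\<forall>k. h k m = c k m))"
  proof -
    fix m :: 'n
    have le: "\<And>k. k \<in> UNIV \<Longrightarrow> h k m \<le> c k m" using termw by blast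
    show "(\<Sum>k\<in>UNIV. h k m) \<le> (\<Sum>k\<in>UNIV. c k m) \<and>
      ((\<Sum>k\<in>UNIV. h k m) = (\<Sum>k\<in>UNIV. c k m) \<longleftrightarrow> (\<forall>k. h k m = c k m))"
      using sum_le_eq_iff[of UNIV "\<lambda>k. h k m" "\<lambda>k. c k m", OF finite le] by blast
  qed
  have outer: "(\<Sum>m\<in>UNIV. \<Sum>k\<in>UNIV. h k m) \<le> (\<Sum>m\<in>UNIV. \<Sum>k\<in>UNIV. c k m) \<and>
      ((\<Sum>m\<in>UNIV. \<Sum>k\<in>UNIV. h k m) = (\<Sum>m\<in>UNIV. \<Sum>k\<in>UNIV. c k m) \<longleftrightarrow>
        (\<forall>m. (\<Sum>k\<in>UNIV. h k m) = (\<Sum>k\<in>UNIV. c k m)))"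
    using sum_le_eq_iff[of UNIV "\<lambda>m. \<Sum>k\<in>UNIV. h k m" "\<lambda>m. \<Sum>k\<in>UNIV. c k m", OF finite] inner by blast
  have cond: "(\<forall>m k. h k m = c k m) \<longleftrightarrow>
      (\<forall>j k. p \<theta> j > 0 \<and> p \<theta> k > 0 \<longrightarrow> braket (dw \<theta> j) (w \<theta> k) = 0)"
    using termw F1 by (auto simp: P_def wt_def)
  show ?thesis unfolding Hsum Csum using outer inner cond by auto
qed

end
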